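(* For $n\ge 1$, there is a one-to-one correspondence between the set of signed permutations $\pi=\pi_1\pi_2\cdots\pi_n$ of $\{0,1,\dots,n-1\}$ with $\pi_n\neq 0$ (that is, $\pi_n$ is not the unbarred $0$) that are representations of signed skew derangements on $[n]$, and the set of derangements of type $B$ on $[n]$.
   Context: A signed permutation on a set $S$ of integers is an arrangement of the elements of $S$ in which some entries carry a bar. A derangement of type $B$ on $[n]$ is a signed permutation $\tau_1\cdots\tau_n$ of $[n]$ with $\tau_i\neq i$ for all $i$ (where $\tau_i=\bar i$ is allowed). A signed set on $[n]$ is $[n]$ with some elements barred; for such $X$, $X-1$ is obtained by subtracting $1$ from each element using $\bar i-1=\overline{i-1}$. A signed skew derangement on $[n]$ is a bijection $f:X\to X-1$, for some signed set $X$ on $[n]$, with $f(x)\ne x$ for all $x\in X$. The representation of a bijection $f:X\to X-1$ is the signed permutation $\pi_1\cdots\pi_n$ of $\{0,\dots,n-1\}$ given by $\pi_i=f(\sigma_i)$, where $\sigma_i$ is the element of $X$ with underlying value $i$; this gives a bijection between all such maps $f$ (over all signed sets $X$) and all signed permutations of $\{0,\dots,n-1\}$. *)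

theory Defs
  imports Main
begin

text \<open>A signed integer is a pair (value, barred); barred = True means the entry carries a bar.\<close>
type_synonym sint = "nat \<times> bool"

definition signed_perm :: "nat set \<Rightarrow> sint list \<Rightarrow> bool" where
  "signed_perm S xs \<longleftrightarrow> distinct (map fst xs) \<and> set (map fst xs) = S"

definition typeB_derangement :: "nat \<Rightarrow> sint list \<Rightarrow> bool" where
  "typeB_derangement n \<tau> \<longleftrightarrow> signed_perm {1..n} \<tau> \<and> (\<forall>i<n. \<tau> ! i \<noteq> (i + 1, False))"

definition signed_set :: "nat \<Rightarrow> sint set \<Rightarrow> bool" where
  "signed_set n X \<longleftrightarrow> fst ` X = {1..n} \<and> inj_on fst X"

definition shift_down :: "sint set \<Rightarrow> sint set" where
  "shift_down X = (\<lambda>(i, c). (i - 1, c)) ` X"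

definition signed_skew_derangement :: "nat \<Rightarrow> sint set \<Rightarrow> (sint \<Rightarrow> sint) \<Rightarrow> bool" where
  "signed_skew_derangement n X f \<longleftrightarrow>
     signed_set n X \<and> bij_betw f X (shift_down X) \<and> (\<forall>x\<in>X. f x \<noteq> x)"

definition representation :: "nat \<Rightarrow> sint set \<Rightarrow> (sint \<Rightarrow> sint) \<Rightarrow> sint list" where
  "representation n X f = map (\<lambda>i. f (THE x. x \<in> X \<and> fst x = i)) [1..<n+1]"

definition represents_skew_derangement :: "nat \<Rightarrow> sint list \<Rightarrow> bool" where
  "represents_skew_derangement n \<pi> \<longleftrightarrow>
     (\<exists>X f. signed_skew_derangement n X f \<and> \<pi> = representation n X f)"

end

theory Submission
  imports Defs
begin

definition barv :: "sint list \<Rightarrow> nat \<Rightarrow> bool" where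
  "barv xs v = the (map_of xs v)"

lemma barv_eq: "distinct (map fst xs) \<Longrightarrow> (v,b) \<in> set xs \<Longrightarrow> barv xs v = b"
  by (simp add: barv_def map_of_is_SomeI)

lemma sp_len: "signed_perm S xs \<Longrightarrow> finite S \<Longrightarrow> length xs = card S"
  unfolding signed_perm_def by (metis distinct_card length_map)

lemma sp_mem: "signed_perm S xs \<Longrightarrow> v \<in> S \<Longrightarrow> (v, barv xs v) \<in> set xs"
  unfolding signed_perm_def
proof -
  assume a: "distinct (map fst xs) \<and> set (map fst xs) = S" and v: "v \<in> S"
  then obtain b where "(v,b) \<in> set xs" by force
  moreover have "barv xs v = b" using barv_eq a calculation by blast
  ultimately show ?thesis by simp
qed

lemma sp_bar: "signed_perm S xs \<Longrightarrow> (v,b) \<in> set xs \<Longrightarrow> barv xs v = b"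
  unfolding signed_perm_def using barv_eq by blast

lemma sp_fst: "signed_perm S xs \<Longrightarrow> (v,b) \<in> set xs \<Longrightarrow> v \<in> S"
  unfolding signed_perm_def by force

definition vw :: "nat \<Rightarrow> nat \<Rightarrow> nat" where "vw n v = (if v = 0 then n else v)"
definition wv :: "nat \<Rightarrow> nat \<Rightarrow> nat" where "wv n w = (if w = n then 0 else w)"
definition ee :: "sint list \<Rightarrow> nat \<Rightarrow> bool" where
  "ee \<pi> v = (if v = 0 then barv \<pi> 0 else (barv \<pi> v \<noteq> barv \<pi> (v - 1)))"
fun cc :: "nat \<Rightarrow> sint list \<Rightarrow> nat \<Rightarrow> bool" where
  "cc n \<tau> 0 = barv \<tau> n"
| "cc n \<tau> (Suc j) = (cc n \<tau> j \<noteq> barv \<tau> (Suc j))"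

definition G :: "nat \<Rightarrow> sint list \<Rightarrow> sint list" where
  "G n \<pi> = map (\<lambda>(v,b). (vw n v, ee \<pi> v)) \<pi>"
definition H :: "nat \<Rightarrow> sint list \<Rightarrow> sint list" where
  "H n \<tau> = map (\<lambda>(w,e). (wv n w, cc n \<tau> (wv n w))) \<tau>"

lemma G_sp:
  assumes "n \<ge> 1" "signed_perm {0..<n} \<pi>"
  shows "signed_perm {1..n} (G n \<pi>)"
proof -
  have m: "map fst (G n \<pi>) = map (vw n) (map fst \<pi>)"
    by (auto simp: G_def split: prod.splits)
  have inj: "inj_on (vw n) {0..<n}" by (auto simp: inj_on_def vw_def split: if_splits)
  have im: "vw n ` {0..<n} = {1..n}"
  proof
    show "vw n ` {0..<n} \<subseteq> {1..n}" using assms(1) by (auto simp: vw_def)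
    show "{1..n} \<subseteq> vw n ` {0..<n}"
    proof
      fix w assume w: "w \<in> {1..n}"
      show "w \<in> vw n ` {0..<n}"
      proof (cases "w = n")
        case True then show ?thesis using assms(1) by (auto simp: vw_def intro!: image_eqI[of _ _ 0])
      next
        case False then show ?thesis using w by (auto simp: vw_def intro!: image_eqI[of _ _ w])
      qed
    qed
  qed
  have d: "distinct (map fst \<pi>)" "set (map fst \<pi>) = {0..<n}" using assms(2) unfolding signed_perm_def by auto
  have "distinct (map (vw n) (map fst \<pi>))" using d inj by (simp only: distinct_map)
  moreover have "set (map (vw n) (map fst \<pi>)) = {1..n}" using d im by (simp only: set_map)
  ultimately show ?thesis unfolding signed_perm_def m by simp
qed

lemma G_bar:
  assumes "n \<ge> 1" "signed_perm {0..<n} \<pi>" "w \<in> {1..n}"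
  shows "barv (G n \<pi>) w = ee \<pi> (wv n w)"
proof -
  have v: "wv n w \<in> {0..<n}" using assms by (auto simp: wv_def)
  have "(wv n w, barv \<pi> (wv n w)) \<in> set \<pi>" using sp_mem[OF assms(2) v] .
  hence "(vw n (wv n w), ee \<pi> (wv n w)) \<in> set (G n \<pi>)" unfolding G_def by force
  moreover have "vw n (wv n w) = w" using assms by (auto simp: vw_def wv_def)
  ultimately show ?thesis using sp_bar[OF G_sp[OF assms(1,2)]] by simp
qed

lemma H_sp:
  assumes "n \<ge> 1" "signed_perm {1..n} \<tau>"
  shows "signed_perm {0..<n} (H n \<tau>)"
proof -
  have m: "map fst (H n \<tau>) = map (wv n) (map fst \<tau>)"
    by (auto simp: H_def split: prod.splits)
  have inj: "inj_on (wv n) {1..n}" by (auto simp: inj_on_def wv_def split: if_splits)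
  have im: "wv n ` {1..n} = {0..<n}"
  proof
    show "wv n ` {1..n} \<subseteq> {0..<n}" using assms(1) by (auto simp: wv_def)
    show "{0..<n} \<subseteq> wv n ` {1..n}"
    proof
      fix w assume w: "w \<in> {0..<n}"
      show "w \<in> wv n ` {1..n}"
      proof (cases "w = 0")
        case True then show ?thesis using assms(1) by (auto simp: wv_def intro!: image_eqI[of _ _ n])
      next
        case False then show ?thesis using w by (auto simp: wv_def intro!: image_eqI[of _ _ w])
      qed
    qed
  qed
  have d: "distinct (map fst \<tau>)" "set (map fst \<tau>) = {1..n}" using assms(2) unfolding signed_perm_def by auto
  have "distinct (map (wv n) (map fst \<tau>))" using d inj by (simp only: distinct_map)
  moreover have "set (map (wv n) (map fst \<tau>)) = {0..<n}" using d im by (simp only: set_map)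
  ultimately show ?thesis unfolding signed_perm_def m by simp
qed

lemma H_bar:
  assumes "n \<ge> 1" "signed_perm {1..n} \<tau>" "v < n"
  shows "barv (H n \<tau>) v = cc n \<tau> v"
proof -
  have w: "vw n v \<in> {1..n}" using assms by (auto simp: vw_def)
  have "(vw n v, barv \<tau> (vw n v)) \<in> set \<tau>" using sp_mem[OF assms(2) w] .
  hence "(wv n (vw n v), cc n \<tau> (wv n (vw n v))) \<in> set (H n \<tau>)" unfolding H_def by force
  moreover have "wv n (vw n v) = v" using assms by (auto simp: vw_def wv_def)
  ultimately show ?thesis using sp_bar[OF H_sp[OF assms(1,2)]] by simp
qed

lemma cc_G:
  assumes "n \<ge> 1" "signed_perm {0..<n} \<pi>"
  shows "v < n \<Longrightarrow> cc n (G n \<pi>) v = barv \<pi> v"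
proof (induction v)
  case 0
  have "barv (G n \<pi>) n = ee \<pi> (wv n n)" using G_bar[OF assms] assms(1) by simp
  then show ?case by (simp add: wv_def ee_def)
next
  case (Suc j)
  have "barv (G n \<pi>) (Suc j) = ee \<pi> (wv n (Suc j))" using G_bar[OF assms] Suc by simp
  then show ?case using Suc by (auto simp: wv_def ee_def)
qed

lemma HG:
  assumes "n \<ge> 1" "signed_perm {0..<n} \<pi>"
  shows "H n (G n \<pi>) = \<pi>"
proof -
  have "H n (G n \<pi>) = map (\<lambda>(v,b). (wv n (vw n v), cc n (G n \<pi>) (wv n (vw n v)))) \<pi>"
    by (simp add: H_def G_def case_prod_beta)
  also have "\<dots> = \<pi>"
  proof (rule map_idI)
    fix x assume x: "x \<in> set \<pi>"
    obtain v b where xv: "x = (v,b)" by force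
    have v: "v < n" using sp_fst[OF assms(2)] x xv by auto
    have "wv n (vw n v) = v" using v by (auto simp: wv_def vw_def)
    moreover have "cc n (G n \<pi>) v = b" using cc_G[OF assms v] sp_bar[OF assms(2)] x xv by simp
    ultimately show "(\<lambda>(v,b). (wv n (vw n v), cc n (G n \<pi>) (wv n (vw n v)))) x = x"
      using xv by simp
  qed
  finally show ?thesis .
qed

lemma GH:
  assumes "n \<ge> 1" "signed_perm {1..n} \<tau>"
  shows "G n (H n \<tau>) = \<tau>"
proof -
  have "G n (H n \<tau>) = map (\<lambda>(w,e). (vw n (wv n w), ee (H n \<tau>) (wv n w))) \<tau>"
    by (simp add: H_def G_def case_prod_beta)
  also have "\<dots> = \<tau>"
  proof (rule map_idI)
    fix x assume x: "x \<in> set \<tau>"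
    obtain w e where xw: "x = (w,e)" by force
    have w: "w \<in> {1..n}" using sp_fst[OF assms(2)] x xw by auto
    have be: "barv \<tau> w = e" using sp_bar[OF assms(2)] x xw by simp
    have "vw n (wv n w) = w" using w by (auto simp: wv_def vw_def)
    moreover have "ee (H n \<tau>) (wv n w) = e"
    proof (cases "w = n")
      case True
      then show ?thesis using H_bar[OF assms, of 0] assms(1) be by (simp add: ee_def wv_def)
    next
      case False
      then obtain j where j: "w = Suc j" "Suc j < n" using w by (cases w) auto
      then show ?thesis using H_bar[OF assms, of "Suc j"] H_bar[OF assms, of j] be
        by (auto simp: ee_def wv_def)
    qed
    ultimately show "(\<lambda>(w,e). (vw n (wv n w), ee (H n \<tau>) (wv n w))) x = x"
      using xw by simp
  qed
  finally show ?thesis .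
qed


definition goodA :: "nat \<Rightarrow> sint list \<Rightarrow> bool" where
  "goodA n \<pi> \<longleftrightarrow> signed_perm {0..<n} \<pi> \<and> \<pi> ! (n - 1) \<noteq> (0, False) \<and>
     (\<forall>k b. Suc k < n \<longrightarrow> \<pi> ! k = (Suc k, b) \<longrightarrow> (k, b) \<notin> set \<pi>)"

lemma G_B:
  assumes n: "n \<ge> 1" and g: "goodA n \<pi>"
  shows "typeB_derangement n (G n \<pi>)"
proof -
  have sp: "signed_perm {0..<n} \<pi>" using g by (simp add: goodA_def)
  have len: "length \<pi> = n" using sp_len[OF sp] by simp
  have "\<forall>i<n. G n \<pi> ! i \<noteq> (i + 1, False)"
  proof (intro allI impI)
    fix i assume i: "i < n"
    obtain v b where vb: "\<pi> ! i = (v,b)" by force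
    have mem: "(v,b) \<in> set \<pi>" using vb i len by (metis nth_mem)
    have bb: "barv \<pi> v = b" using sp_bar[OF sp mem] .
    have vn: "v < n" using sp_fst[OF sp mem] by simp
    have Gi: "G n \<pi> ! i = (vw n v, ee \<pi> v)" using i len vb by (simp add: G_def)
    show "G n \<pi> ! i \<noteq> (i + 1, False)"
    proof
      assume eq: "G n \<pi> ! i = (i + 1, False)"
      show False
      proof (cases "v = 0")
        case True
        then have "i + 1 = n" "b = False" using eq Gi bb by (auto simp: vw_def ee_def)
        then have "\<pi> ! (n - 1) = (0, False)" using vb True by (metis add_diff_cancel_right')
        then show False using g by (simp add: goodA_def)
      next
        case False
        then have v: "v = Suc i" and e: "barv \<pi> i = b" using eq Gi bb by (auto simp: vw_def ee_def)
        have "(i, barv \<pi> i) \<in> set \<pi>" using sp_mem[OF sp] i by simp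
        then show False using g vb v vn e by (auto simp: goodA_def)
      qed
    qed
  qed
  then show ?thesis using G_sp[OF n sp] by (simp add: typeB_derangement_def)
qed

lemma H_A:
  assumes n: "n \<ge> 1" and t: "typeB_derangement n \<tau>"
  shows "goodA n (H n \<tau>)"
proof -
  have sp: "signed_perm {1..n} \<tau>" and nd: "\<forall>i<n. \<tau> ! i \<noteq> (i + 1, False)"
    using t by (auto simp: typeB_derangement_def)
  have len: "length \<tau> = n" using sp_len[OF sp] by simp
  have Hi: "H n \<tau> ! i = (wv n (fst (\<tau>!i)), cc n \<tau> (wv n (fst (\<tau>!i))))" if "i < n" for i
    using that len by (simp add: H_def case_prod_beta)
  have info: "fst (\<tau>!i) \<in> {1..n} \<and> barv \<tau> (fst (\<tau>!i)) = snd (\<tau>!i)" if "i < n" for i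
  proof -
    have "(fst (\<tau>!i), snd (\<tau>!i)) \<in> set \<tau>" using that len by simp
    then show ?thesis using sp_fst[OF sp] sp_bar[OF sp] by blast
  qed
  have c1: "H n \<tau> ! (n - 1) \<noteq> (0, False)"
  proof
    assume eq: "H n \<tau> ! (n - 1) = (0, False)"
    have l: "n - 1 < n" using n by simp
    have "fst (\<tau>!(n-1)) = n" using eq Hi[OF l] info[OF l] by (auto simp: wv_def split: if_splits)
    moreover have "snd (\<tau>!(n-1)) = False" using eq Hi[OF l] info[OF l] calculation by (simp add: wv_def)
    ultimately have "\<tau>!(n-1) = (n - 1 + 1, False)" using n by (metis le_add_diff_inverse2 prod.collapse)
    then show False using nd l by blast
  qed
  have c2: "\<forall>k b. Suc k < n \<longrightarrow> H n \<tau> ! k = (Suc k, b) \<longrightarrow> (k, b) \<notin> set (H n \<tau>)"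
  proof (intro allI impI notI)
    fix k b assume k: "Suc k < n" and eq: "H n \<tau> ! k = (Suc k, b)" and m: "(k, b) \<in> set (H n \<tau>)"
    have kl: "k < n" using k by simp
    have w: "fst (\<tau>!k) = Suc k" using eq Hi[OF kl] k by (auto simp: wv_def split: if_splits)
    have b: "b = cc n \<tau> (Suc k)" using eq Hi[OF kl] w k by (simp add: wv_def)
    have "b = cc n \<tau> k" using sp_bar[OF H_sp[OF n sp] m] H_bar[OF n sp kl] by simp
    then have "snd (\<tau>!k) = False" using b info[OF kl] w by auto
    then have "\<tau>!k = (k + 1, False)" using w by (metis Suc_eq_plus1 prod.collapse)
    then show False using nd kl by blast
  qed
  show ?thesis using c1 c2 H_sp[OF n sp] by (simp add: goodA_def)
qed

lemma sigma:
  assumes "signed_set n X" "i \<in> {1..n}"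
  shows "(THE x. x \<in> X \<and> fst x = i) \<in> X \<and> fst (THE x. x \<in> X \<and> fst x = i) = i"
proof -
  have "i \<in> fst ` X" using assms by (simp add: signed_set_def)
  then obtain x where x: "x \<in> X" "fst x = i" by blast
  have inj: "inj_on fst X" using assms(1) by (simp add: signed_set_def)
  have u: "\<And>y. y \<in> X \<and> fst y = i \<Longrightarrow> y = x" using inj x by (auto dest: inj_onD)
  have "(THE x. x \<in> X \<and> fst x = i) = x" using x u by (intro the_equality) blast+
  then show ?thesis using x by simp
qed

lemma char1:
  assumes n: "n \<ge> 1" and sp: "signed_perm {0..<n} \<pi>" and ne: "\<pi> ! (n - 1) \<noteq> (0, False)"
    and r: "represents_skew_derangement n \<pi>"
  shows "goodA n \<pi>"
proof -
  obtain X f where sk: "signed_skew_derangement n X f" and pe: "\<pi> = representation n X f"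
    using r by (auto simp: represents_skew_derangement_def)
  have ss: "signed_set n X" and bj: "bij_betw f X (shift_down X)" and nf: "\<forall>x\<in>X. f x \<noteq> x"
    using sk by (auto simp: signed_skew_derangement_def)
  define \<sigma> where "\<sigma> i = (THE x. x \<in> X \<and> fst x = i)" for i
  have pk: "\<pi> ! k = f (\<sigma> (Suc k))" if "k < n" for k
    using that pe by (simp add: representation_def \<sigma>_def del: upt_Suc)
  have len: "length \<pi> = n" using sp_len[OF sp] by simp
  have sub: "set \<pi> \<subseteq> shift_down X"
  proof
    fix y assume "y \<in> set \<pi>"
    then obtain k where k: "k < n" "y = \<pi> ! k" using len by (metis in_set_conv_nth)
    have "\<sigma> (Suc k) \<in> X" using sigma[OF ss, of "Suc k"] k by (simp add: \<sigma>_def)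
    then show "y \<in> shift_down X" using k pk bj by (auto simp: bij_betw_def)
  qed
  have "\<forall>k b. Suc k < n \<longrightarrow> \<pi> ! k = (Suc k, b) \<longrightarrow> (k, b) \<notin> set \<pi>"
  proof (intro allI impI notI)
    fix k b assume k: "Suc k < n" and eq: "\<pi> ! k = (Suc k, b)" and m: "(k, b) \<in> set \<pi>"
    have "(k, b) \<in> shift_down X" using m sub by blast
    then obtain i c where ic: "(i, c) \<in> X" "(i - 1, c) = (k, b)" by (auto simp: shift_down_def)
    have "i \<in> {1..n}" using ic(1) ss unfolding signed_set_def by force
    then have X: "(Suc k, b) \<in> X" using ic by (cases i) auto
    have s: "\<sigma> (Suc k) \<in> X \<and> fst (\<sigma> (Suc k)) = Suc k" using sigma[OF ss, of "Suc k"] k by (simp add: \<sigma>_def)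
    have "\<sigma> (Suc k) = (Suc k, b)" using s X ss unfolding signed_set_def inj_on_def by fastforce
    then have "f (Suc k, b) = (Suc k, b)" using pk[of k] k eq by simp
    then show False using nf X by blast
  qed
  then show ?thesis using sp ne by (simp add: goodA_def)
qed

lemma char2:
  assumes n: "n \<ge> 1" and g: "goodA n \<pi>"
  shows "represents_skew_derangement n \<pi>"
proof -
  have sp: "signed_perm {0..<n} \<pi>" and gd: "\<forall>k b. Suc k < n \<longrightarrow> \<pi> ! k = (Suc k, b) \<longrightarrow> (k, b) \<notin> set \<pi>"
    using g by (auto simp: goodA_def)
  have len: "length \<pi> = n" using sp_len[OF sp] by simp
  have dist: "distinct (map fst \<pi>)" and st: "fst ` set \<pi> = {0..<n}" using sp by (auto simp: signed_perm_def)
  define X where "X = (\<lambda>(v,b). (Suc v, b)) ` set \<pi>"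
  define f where "f x = \<pi> ! (fst x - 1)" for x :: sint
  have Xmem: "x \<in> X \<longleftrightarrow> fst x \<in> {1..n} \<and> (fst x - 1, snd x) \<in> set \<pi>" for x
  proof
    assume "x \<in> X"
    then obtain v b where "(v,b) \<in> set \<pi>" "x = (Suc v, b)" by (auto simp: X_def)
    then show "fst x \<in> {1..n} \<and> (fst x - 1, snd x) \<in> set \<pi>" using sp_fst[OF sp] by fastforce
  next
    assume a: "fst x \<in> {1..n} \<and> (fst x - 1, snd x) \<in> set \<pi>"
    then have "x = (\<lambda>(v,b). (Suc v, b)) (fst x - 1, snd x)" by (cases x) auto
    then show "x \<in> X" using a unfolding X_def by blast
  qed
  have ss: "signed_set n X"
  proof -
    have "fst ` X = Suc ` fst ` set \<pi>" unfolding X_def by force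
    also have "\<dots> = {1..n}" using st by (simp add: image_Suc_atLeastLessThan atLeastLessThanSuc_atLeastAtMost)
    finally have a: "fst ` X = {1..n}" .
    have "inj_on fst X"
    proof (rule inj_onI)
      fix x y assume "x \<in> X" "y \<in> X" "fst x = fst y"
      assume a: "x \<in> X" "y \<in> X" "fst x = fst y"
      have "(fst x - 1, snd x) \<in> set \<pi>" using a Xmem by blast
      then have "barv \<pi> (fst x - 1) = snd x" by (rule sp_bar[OF sp])
      moreover have "(fst y - 1, snd y) \<in> set \<pi>" using a Xmem by blast
      then have "barv \<pi> (fst y - 1) = snd y" by (rule sp_bar[OF sp])
      ultimately show "x = y" using a(3) by (cases x, cases y) auto
    qed
    then show ?thesis using a by (simp add: signed_set_def)
  qed
  have sd: "shift_down X = set \<pi>"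
  proof -
    have "shift_down X = (\<lambda>(i, c). (i - 1, c)) ` (\<lambda>(v,b). (Suc v, b)) ` set \<pi>"
      by (simp add: shift_down_def X_def)
    also have "\<dots> = set \<pi>" by (force simp: image_image case_prod_beta)
    finally show ?thesis .
  qed
  have dpi: "distinct \<pi>" using dist by (simp add: distinct_map)
  have bj: "bij_betw f X (shift_down X)"
  proof -
    have "inj_on f X"
    proof (rule inj_onI)
      fix x y assume x: "x \<in> X" and y: "y \<in> X" and e: "f x = f y"
      have "fst x - 1 < n" "fst y - 1 < n" using Xmem x y by auto
      then have "fst x - 1 = fst y - 1" using e dpi len by (simp add: f_def nth_eq_iff_index_eq)
      then have "fst x = fst y" using Xmem x y by auto
      then show "x = y" using ss x y unfolding signed_set_def inj_on_def by blast
    qed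
    moreover have "f ` X = set \<pi>"
    proof
      show "f ` X \<subseteq> set \<pi>"
      proof
        fix y assume "y \<in> f ` X"
        then obtain x where "x \<in> X" "y = f x" by blast
        then show "y \<in> set \<pi>" using Xmem len by (auto simp: f_def)
      qed
      show "set \<pi> \<subseteq> f ` X"
      proof
        fix y assume y: "y \<in> set \<pi>"
        then obtain k where k: "k < n" "y = \<pi> ! k" using len by (metis in_set_conv_nth)
        have "(k, barv \<pi> k) \<in> set \<pi>" using sp_mem[OF sp] k by simp
        then have x: "(Suc k, barv \<pi> k) \<in> X" using Xmem[of "(Suc k, barv \<pi> k)"] k by simp
        have "f (Suc k, barv \<pi> k) = y" using k by (simp add: f_def)
        then show "y \<in> f ` X" using x by (metis imageI)
      qed
    qed
    ultimately show ?thesis using sd by (simp add: bij_betw_def)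
  qed
  have nf: "\<forall>x\<in>X. f x \<noteq> x"
  proof (intro ballI notI)
    fix x assume x: "x \<in> X" and eq: "f x = x"
    obtain k b where kb: "x = (Suc k, b)" using Xmem[of x] x by (cases x, cases "fst x") auto
    have m: "(k, b) \<in> set \<pi>" using Xmem[of x] x kb by simp
    have fe: "\<pi> ! k = (Suc k, b)" using eq kb by (simp add: f_def)
    have kn: "k < n" using sp_fst[OF sp m] by simp
    have "Suc k \<in> {0..<n}" using sp_fst[OF sp, of "Suc k" b] fe kn len by (metis nth_mem)
    then have "Suc k < n" by simp
    then show False using gd fe m by blast
  qed
  have rep: "representation n X f = \<pi>"
  proof (rule nth_equalityI)
    show "length (representation n X f) = length \<pi>" using len by (simp add: representation_def)
    fix i assume "i < length (representation n X f)"
    then have i: "i < n" by (simp add: representation_def del: upt_Suc)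
    have s: "(THE x. x \<in> X \<and> fst x = Suc i) \<in> X \<and> fst (THE x. x \<in> X \<and> fst x = Suc i) = Suc i"
      using sigma[OF ss, of "Suc i"] i by simp
    have "representation n X f ! i = f (THE x. x \<in> X \<and> fst x = Suc i)"
      using i by (simp add: representation_def del: upt_Suc)
    also have "\<dots> = \<pi> ! i" using s by (simp add: f_def)
    finally show "representation n X f ! i = \<pi> ! i" .
  qed
  show ?thesis unfolding represents_skew_derangement_def signed_skew_derangement_def
    using ss bj nf rep by metis
qed

theorem lemma3:
  fixes n :: nat
  assumes "n \<ge> 1"
  shows "\<exists>g. bij_betw g
           {\<pi>. signed_perm {0..<n} \<pi> \<and> \<pi> ! (n - 1) \<noteq> (0, False)
                \<and> represents_skew_derangement n \<pi>}
           {\<tau>. typeB_derangement n \<tau>}"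
proof -
  have eqA: "{\<pi>. signed_perm {0..<n} \<pi> \<and> \<pi> ! (n - 1) \<noteq> (0, False)
                \<and> represents_skew_derangement n \<pi>} = {\<pi>. goodA n \<pi>}"
    using char1[OF assms] char2[OF assms] by (auto simp: goodA_def)
  have "bij_betw (G n) {\<pi>. goodA n \<pi>} {\<tau>. typeB_derangement n \<tau>}"
  proof (rule bij_betw_byWitness[where f' = "H n"])
    show "\<forall>a\<in>{\<pi>. goodA n \<pi>}. H n (G n a) = a" using HG[OF assms] by (auto simp: goodA_def)
    show "\<forall>a'\<in>{\<tau>. typeB_derangement n \<tau>}. G n (H n a') = a'"
      using GH[OF assms] by (auto simp: typeB_derangement_def)
    show "G n ` {\<pi>. goodA n \<pi>} \<subseteq> {\<tau>. typeB_derangement n \<tau>}" using G_B[OF assms] by auto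
    show "H n ` {\<tau>. typeB_derangement n \<tau>} \<subseteq> {\<pi>. goodA n \<pi>}" using H_A[OF assms] by auto
  qed
  then show ?thesis using eqA by auto
qed

end
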